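(* Let $\Sigma$ be a finite alphabet and $L\subseteq\Sigma^*$. Then $L$ is accepted by a 1-way quantum finite automaton with probability bounded away from $1/2$ if and only if the relation $L\times\{0\}\ \cup\ \overline{L}\times\{1\}\subseteq \Sigma^*\times\{0,1\}^*$ (where $\overline{L}=\Sigma^*\setminus L$) is computed by some quantum finite state transducer with an isolated cutpoint.
   Context: A quantum finite state transducer (qfst) is a tuple $T=(Q,\Sigma_1,\Sigma_2,V,f,q_0,Q_{\rm acc},Q_{\rm rej})$ with $Q$ a finite set of states, $\Sigma_1,\Sigma_2$ finite input/output alphabets, $q_0\in Q$, and disjoint sets $Q_{\rm acc},Q_{\rm rej}\subseteq Q$ of accepting and rejecting states; $Q_{\rm non}=Q\setminus(Q_{\rm acc}\cup Q_{\rm rej})$. For each $a\in\Sigma_1\cup\{\ddagger,\$\}$ (end markers $\ddagger,\$\notin\Sigma_1$) there is a unitary $V_a$ on $\ell^2(Q)$, $V_a|q\rangle=\sum_p (V_a)_{qp}|p\rangle$, and an output function $f_a:Q\to\Sigma_2^*$; $V_\$$ maps $\mathrm{span}\,Q_{\rm non}$ into $\mathrm{span}(Q_{\rm acc}\cup Q_{\rm rej})$. On input $v\in\Sigma_1^*$ the machine reads $\ddagger v\$$ symbol by symbol. Its non-halting part is an (unnormalized) vector $\psi=\sum_{q,w}\alpha_{qw}|q\rangle\otimes|w\rangle\in\ell^2(Q\times\Sigma_2^* )$, initially $|q_0\rangle\otimes|\epsilon\rangle$. Reading $a$ maps $\psi$ to $\psi'=\sum_{q,w}\alpha_{qw}V_a|q\rangle\otimes|w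 f_a(q)\rangle$; then for each $x\in\Sigma_2^*$ the squared norm of the component of $\psi'$ on $\mathrm{span}(Q_{\rm acc})\otimes|x\rangle$ is added to the probability of accepting with output $x$, the squared norm of the component of $\psi'$ on $\mathrm{span}(Q_{\rm rej})\otimes\ell^2(\Sigma_2^* )$ is added to the rejection probability, and the computation continues with the projection of $\psi'$ onto $\mathrm{span}(Q_{\rm non})\otimes\ell^2(\Sigma_2^* )$. $T(w|v)$ denotes the total probability of accepting with output $w$ on input $v$. A relation $\mathcal R\subseteq\Sigma_1^*\times\Sigma_2^*$ is computed by $T$ with isolated cutpoint if there are $0<\alpha<1$ and $\varepsilon>0$ such that for all $v,w$: $(v,w)\in\mathcal R\Rightarrow T(w|v)\ge\alpha+\varepsilon$ and $(v,w)\notin\mathcal R\Rightarrow T(w|v)\le\alpha-\varepsilon$. A 1-way quantum finite automaton (in the Kondacs–Watrous measure-many sense) is the same device without output tape and output functions: acceptance/rejection probabilities accumulate from the halting measurement after each symbol of $\ddagger v\$$. It accepts $L$ with probability bounded away from $1/2$ if there is $\delta>0$ such that words in $L$ are accepted with probability $\ge 1/2+\delta$ and words not in $L$ with probability $\le 1/2-\delta$. *)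

theory Defs
  imports Complex_Main
begin

datatype 'a tsym = Sym 'a | LEnd | REnd

definition tape :: "'a list \<Rightarrow> 'a tsym list" where
  "tape v = LEnd # map Sym v @ [REnd]"

datatype bit = Zero | One

(* States are a finite set of natural numbers; V a q p is the matrix entry (V_a)_{qp},
   so that V_a |q> = sum_p (V_a)_{qp} |p>. *)
record ('a, 'b) qfst =
  st   :: "nat set"
  V    :: "'a tsym \<Rightarrow> nat \<Rightarrow> nat \<Rightarrow> complex"
  outf :: "'a tsym \<Rightarrow> nat \<Rightarrow> 'b list"
  q0   :: nat
  acc  :: "nat set"
  rej  :: "nat set"

record 'a qfa =
  qst   :: "nat set"
  qV    :: "'a tsym \<Rightarrow> nat \<Rightarrow> nat \<Rightarrow> complex"
  qq0   :: nat
  qacc  :: "nat set"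
  qrej  :: "nat set"

definition unitary_on :: "nat set \<Rightarrow> (nat \<Rightarrow> nat \<Rightarrow> complex) \<Rightarrow> bool" where
  "unitary_on Q U \<longleftrightarrow>
     (\<forall>q\<in>Q. \<forall>q'\<in>Q. (\<Sum>p\<in>Q. U q p * cnj (U q' p)) = (if q = q' then 1 else 0))"

definition qfst_wf :: "('a, 'b) qfst \<Rightarrow> bool" where
  "qfst_wf T \<longleftrightarrow> finite (st T) \<and> q0 T \<in> st T \<and> acc T \<subseteq> st T \<and> rej T \<subseteq> st T
     \<and> acc T \<inter> rej T = {}
     \<and> (\<forall>a. unitary_on (st T) (V T a))
     \<and> (\<forall>q\<in>st T - (acc T \<union> rej T). \<forall>p\<in>st T - (acc T \<union> rej T). V T REnd q p = 0)"

definition qfa_wf :: "'a qfa \<Rightarrow> bool" where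
  "qfa_wf M \<longleftrightarrow> finite (qst M) \<and> qq0 M \<in> qst M \<and> qacc M \<subseteq> qst M \<and> qrej M \<subseteq> qst M
     \<and> qacc M \<inter> qrej M = {}
     \<and> (\<forall>a. unitary_on (qst M) (qV M a))
     \<and> (\<forall>q\<in>qst M - (qacc M \<union> qrej M). \<forall>p\<in>qst M - (qacc M \<union> qrej M). qV M REnd q p = 0)"

(* ----- QFST semantics.  The (non-halting) state psi is a finitely supported function
   psi q w = alpha_{q w} on Q x Sigma_2^*. ----- *)

(* psi' = sum over q,w of alpha_qw V_a|q> tensor |w f_a q>, i.e.
   psi' p x = sum over q in Q with x = w @ f_a q of alpha_qw times (V_a)_qp *)
definition qfst_evolve ::
  "('a, 'b) qfst \<Rightarrow> 'a tsym \<Rightarrow> (nat \<Rightarrow> 'b list \<Rightarrow> complex) \<Rightarrow> nat \<Rightarrow> 'b list \<Rightarrow> complex" where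
  "qfst_evolve T a psi p x =
     (\<Sum>q\<in>st T. if length (outf T a q) \<le> length x
                   \<and> drop (length x - length (outf T a q)) x = outf T a q
                 then psi q (take (length x - length (outf T a q)) x) * V T a q p else 0)"

definition qfst_proj_non ::
  "('a, 'b) qfst \<Rightarrow> (nat \<Rightarrow> 'b list \<Rightarrow> complex) \<Rightarrow> nat \<Rightarrow> 'b list \<Rightarrow> complex" where
  "qfst_proj_non T psi p x = (if p \<in> st T - (acc T \<union> rej T) then psi p x else 0)"

fun qfst_acc_run ::
  "('a, 'b) qfst \<Rightarrow> (nat \<Rightarrow> 'b list \<Rightarrow> complex) \<Rightarrow> 'a tsym list \<Rightarrow> 'b list \<Rightarrow> real" where
  "qfst_acc_run T psi [] w = 0"
| "qfst_acc_run T psi (a # as) w =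
     (let psi' = qfst_evolve T a psi
      in (\<Sum>p\<in>acc T. (cmod (psi' p w))\<^sup>2) + qfst_acc_run T (qfst_proj_non T psi') as w)"

definition qfst_prob :: "('a, 'b) qfst \<Rightarrow> 'b list \<Rightarrow> 'a list \<Rightarrow> real" where
  "qfst_prob T w v =
     qfst_acc_run T (\<lambda>q x. if q = q0 T \<and> x = [] then 1 else 0) (tape v) w"

definition computes_isolated :: "('a, 'b) qfst \<Rightarrow> ('a list \<times> 'b list) set \<Rightarrow> bool" where
  "computes_isolated T R \<longleftrightarrow>
     (\<exists>\<alpha> \<epsilon>::real. 0 < \<alpha> \<and> \<alpha> < 1 \<and> \<epsilon> > 0 \<and>
        (\<forall>v w. ((v, w) \<in> R \<longrightarrow> qfst_prob T w v \<ge> \<alpha> + \<epsilon>) \<and>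
               ((v, w) \<notin> R \<longrightarrow> qfst_prob T w v \<le> \<alpha> - \<epsilon>)))"

definition qfa_evolve :: "'a qfa \<Rightarrow> 'a tsym \<Rightarrow> (nat \<Rightarrow> complex) \<Rightarrow> nat \<Rightarrow> complex" where
  "qfa_evolve M a psi p = (\<Sum>q\<in>qst M. psi q * qV M a q p)"

definition qfa_proj_non :: "'a qfa \<Rightarrow> (nat \<Rightarrow> complex) \<Rightarrow> nat \<Rightarrow> complex" where
  "qfa_proj_non M psi p = (if p \<in> qst M - (qacc M \<union> qrej M) then psi p else 0)"

fun qfa_acc_run :: "'a qfa \<Rightarrow> (nat \<Rightarrow> complex) \<Rightarrow> 'a tsym list \<Rightarrow> real" where
  "qfa_acc_run M psi [] = 0"
| "qfa_acc_run M psi (a # as) =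
     (let psi' = qfa_evolve M a psi
      in (\<Sum>p\<in>qacc M. (cmod (psi' p))\<^sup>2) + qfa_acc_run M (qfa_proj_non M psi') as)"

definition qfa_prob :: "'a qfa \<Rightarrow> 'a list \<Rightarrow> real" where
  "qfa_prob M v = qfa_acc_run M (\<lambda>q. if q = qq0 M then 1 else 0) (tape v)"

definition qfa_accepts_bounded :: "'a qfa \<Rightarrow> 'a list set \<Rightarrow> bool" where
  "qfa_accepts_bounded M L \<longleftrightarrow>
     (\<exists>\<delta>::real. \<delta> > 0 \<and>
        (\<forall>v. (v \<in> L \<longrightarrow> qfa_prob M v \<ge> 1/2 + \<delta>) \<and>
             (v \<notin> L \<longrightarrow> qfa_prob M v \<le> 1/2 - \<delta>)))"

definition char_rel :: "'a list set \<Rightarrow> ('a list \<times> bit list) set" where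
  "char_rel L = {(v, [Zero]) | v. v \<in> L} \<union> {(v, [One]) | v. v \<notin> L}"

end

theory Submission
  imports Defs
begin

lemma div_set_image:
  assumes "(k::nat) > 0"
  shows "{n. n div k \<in> Q} = (\<lambda>(q,t). k*q+t) ` (Q \<times> {..<k})"
proof (intro set_eqI iffI)
  fix n assume "n \<in> {n. n div k \<in> Q}"
  then show "n \<in> (\<lambda>(q,t). k*q+t) ` (Q \<times> {..<k})"
    using assms by (auto intro!: image_eqI[where x="(n div k, n mod k)"])
next
  fix n assume "n \<in> (\<lambda>(q,t). k*q+t) ` (Q \<times> {..<k})"
  then show "n \<in> {n. n div k \<in> Q}" using assms by auto
qed

lemma div_set_inj:
  assumes "(k::nat) > 0"
  shows "inj_on (\<lambda>(q,t). k*q+t) (Q \<times> {..<k})"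
proof (rule inj_onI, clarsimp)
  fix q t q' t' assume "t < k" "t' < k" "k*q+t = k*q'+t'"
  then have "(k*q+t) div k = (k*q'+t') div k" "(k*q+t) mod k = (k*q'+t') mod k" by simp_all
  then show "q = q' \<and> t = t'" using assms \<open>t<k\<close> \<open>t'<k\<close> by simp
qed

lemma finite_div_set: "(k::nat) > 0 \<Longrightarrow> finite Q \<Longrightarrow> finite {n. n div k \<in> Q}"
  by (simp add: div_set_image)

lemma sum_div_set:
  assumes "(k::nat) > 0" "finite Q"
  shows "(\<Sum>n\<in>{n. n div k \<in> Q}. g n) = (\<Sum>q\<in>Q. \<Sum>t<k. g (k*q+t))"
proof -
  have "(\<Sum>n\<in>{n. n div k \<in> Q}. g n) = (\<Sum>x\<in>Q \<times> {..<k}. g ((\<lambda>(q,t). k*q+t) x))"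
    unfolding div_set_image[OF assms(1)] by (rule sum.reindex[OF div_set_inj[OF assms(1)], unfolded comp_def])
  also have "\<dots> = (\<Sum>q\<in>Q. \<Sum>t<k. g (k*q+t))"
    unfolding sum.cartesian_product by (simp add: case_prod_beta)
  finally show ?thesis .
qed

lemma unitary_block:
  assumes k: "(k::nat) > 0" and fin: "finite Q"
    and M: "\<And>g. g < k \<Longrightarrow> unitary_on Q (M g)"
    and C: "\<And>q. q \<in> Q \<Longrightarrow> unitary_on {..<k} (C q)"
  shows "unitary_on {n. n div k \<in> Q}
           (\<lambda>n m. C (n div k) (n mod k) (m mod k) * M (m mod k) (n div k) (m div k))"
  unfolding unitary_on_def
proof (intro ballI)
  fix n n' assume n: "n \<in> {n. n div k \<in> Q}" and n': "n' \<in> {n. n div k \<in> Q}"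
  define q where "q = n div k" define f where "f = n mod k"
  define q' where "q' = n' div k" define f' where "f' = n' mod k"
  have q: "q \<in> Q" "q' \<in> Q" using n n' q_def q'_def by auto
  have f: "f < k" "f' < k" using k f_def f'_def by auto
  have "(\<Sum>m\<in>{n. n div k \<in> Q}. C q f (m mod k) * M (m mod k) q (m div k) *
            cnj (C q' f' (m mod k) * M (m mod k) q' (m div k)))
      = (\<Sum>p\<in>Q. \<Sum>g<k. C q f g * M g q p * cnj (C q' f' g * M g q' p))"
    using k by (simp add: sum_div_set[OF k fin])
  also have "\<dots> = (\<Sum>g<k. C q f g * cnj (C q' f' g) * (\<Sum>p\<in>Q. M g q p * cnj (M g q' p)))"
    by (subst sum.swap) (simp add: sum_distrib_left mult_ac)
  also have "\<dots> = (\<Sum>g<k. C q f g * cnj (C q' f' g) * (if q = q' then 1 else 0))"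
    using M q unfolding unitary_on_def by (intro sum.cong) auto
  also have "\<dots> = (if n = n' then 1 else 0)"
  proof (cases "q = q'")
    case True
    have "(\<Sum>g<k. C q f g * cnj (C q f' g)) = (if f = f' then 1 else 0)"
      using C[OF q(1)] f unfolding unitary_on_def by auto
    moreover have "n = n' \<longleftrightarrow> f = f'" using True q_def q'_def f_def f'_def
      by (metis div_mult_mod_eq)
    ultimately show ?thesis using True by simp
  next
    case False
    then have "n \<noteq> n'" using q_def q'_def by auto
    then show ?thesis using False by simp
  qed
  finally show "(\<Sum>m\<in>{n. n div k \<in> Q}. C (n div k) (n mod k) (m mod k) * M (m mod k) (n div k) (m div k) *
            cnj (C (n' div k) (n' mod k) (m mod k) * M (m mod k) (n' div k) (m div k))) = (if n = n' then 1 else 0)"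
    using q_def q'_def f_def f'_def by simp
qed

lemma norm_pres:
  assumes "unitary_on Q U" "finite Q"
  shows "(\<Sum>p\<in>Q. (cmod (\<Sum>q\<in>Q. psi q * U q p))\<^sup>2) = (\<Sum>q\<in>Q. (cmod (psi q))\<^sup>2)"
proof -
  have "complex_of_real (\<Sum>p\<in>Q. (cmod (\<Sum>q\<in>Q. psi q * U q p))\<^sup>2)
      = (\<Sum>p\<in>Q. (\<Sum>q\<in>Q. psi q * U q p) * cnj (\<Sum>q\<in>Q. psi q * U q p))"
    by (simp only: of_real_sum complex_norm_square)
  also have "\<dots> = (\<Sum>p\<in>Q. \<Sum>q\<in>Q. \<Sum>q'\<in>Q. psi q * cnj (psi q') * (U q p * cnj (U q' p)))"
    by (simp add: sum_product mult_ac)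
  also have "\<dots> = (\<Sum>q\<in>Q. \<Sum>p\<in>Q. \<Sum>q'\<in>Q. psi q * cnj (psi q') * (U q p * cnj (U q' p)))"
    by (rule sum.swap)
  also have "\<dots> = (\<Sum>q\<in>Q. \<Sum>q'\<in>Q. \<Sum>p\<in>Q. psi q * cnj (psi q') * (U q p * cnj (U q' p)))"
    by (intro sum.cong refl sum.swap)
  also have "\<dots> = (\<Sum>q\<in>Q. \<Sum>q'\<in>Q. psi q * cnj (psi q') * (\<Sum>p\<in>Q. U q p * cnj (U q' p)))"
    by (simp add: sum_distrib_left)
  also have "\<dots> = (\<Sum>q\<in>Q. \<Sum>q'\<in>Q. psi q * cnj (psi q') * (if q = q' then 1 else 0))"
    using assms(1) unfolding unitary_on_def by (intro sum.cong) auto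
  also have "\<dots> = (\<Sum>q\<in>Q. psi q * cnj (psi q))"
    using assms(2) by (simp add: if_distrib cong: if_cong)
  also have "\<dots> = complex_of_real (\<Sum>q\<in>Q. (cmod (psi q))\<^sup>2)"
    by (simp only: of_real_sum complex_norm_square)
  finally show ?thesis using of_real_eq_iff by blast
qed

definition wt :: "nat \<Rightarrow> bit list" where
  "wt t = (if t = 0 then [] else if t = 1 then [Zero] else [One])"

definition sig :: "bit list \<Rightarrow> nat \<Rightarrow> nat" where
  "sig u t = (case u of [] \<Rightarrow> t
     | [b] \<Rightarrow> (if t = 0 then (if b = Zero then 1 else 2) else if t = 1 then 4 else if t = 2 then 5
              else if t = 3 then 0 else if t = 4 then (if b = Zero then 2 else 1) else if t = 5 then 3 else t)
     | _ \<Rightarrow> (if t < 3 then t + 3 else if t < 6 then t - 3 else t))"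

lemma lt7_cases: "(t::nat) < 7 \<Longrightarrow> t = 0 \<or> t = 1 \<or> t = 2 \<or> t = 3 \<or> t = 4 \<or> t = 5 \<or> t = 6"
  by auto

lemma lt3_cases: "(t::nat) < 3 \<Longrightarrow> t = 0 \<or> t = 1 \<or> t = 2"
  by auto

lemma list_cases3: obtains "u = []" | b where "u = [b]" | b c r where "u = b # c # r"
  by (metis list.exhaust)

lemma bit_cases: "b = Zero \<or> b = One"
  by (cases b) auto

lemma sig_lt: "t < 7 \<Longrightarrow> sig u t < 7"
  by (cases u rule: list_cases3) (auto simp: sig_def)

lemma sig_6: "sig u 6 = 6"
  by (cases u rule: list_cases3) (auto simp: sig_def)

lemma sig_ne6: "t < 6 \<Longrightarrow> sig u t < 6"
  by (cases u rule: list_cases3) (auto simp: sig_def)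

lemma sig_inj: "t < 7 \<Longrightarrow> t' < 7 \<Longrightarrow> sig u t = sig u t' \<Longrightarrow> t = t'"
proof (cases u rule: list_cases3)
  case 1 then show "t < 7 \<Longrightarrow> t' < 7 \<Longrightarrow> sig u t = sig u t' \<Longrightarrow> t = t'" by (simp add: sig_def)
next
  case (2 b) then show "t < 7 \<Longrightarrow> t' < 7 \<Longrightarrow> sig u t = sig u t' \<Longrightarrow> t = t'"
    using bit_cases[of b] by (auto simp: sig_def dest!: lt7_cases)
next
  case (3 b c r) then show "t < 7 \<Longrightarrow> t' < 7 \<Longrightarrow> sig u t = sig u t' \<Longrightarrow> t = t'"
    by (auto simp: sig_def split: if_splits)
qed

lemma sum3: "(\<Sum>t<3. F t) = F 0 + F 1 + F (2::nat)"
  by (simp add: eval_nat_numeral)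

lemma sum6: "(\<Sum>t<6. F t) = F 0 + F 1 + F 2 + F 3 + F 4 + F (5::nat)"
  by (simp add: eval_nat_numeral)

lemma sum7: "(\<Sum>t<7. F t) = F 0 + F 1 + F 2 + F 3 + F 4 + F 5 + F (6::nat)"
  by (simp add: eval_nat_numeral)

definition tagR :: "real \<Rightarrow> real \<Rightarrow> nat \<Rightarrow> nat \<Rightarrow> nat \<Rightarrow> complex" where
  "tagR c d ss t s = (if t = ss then (if s = ss then complex_of_real c else if s = 6 then complex_of_real d else 0)
     else if t = 6 then (if s = ss then - complex_of_real d else if s = 6 then complex_of_real c else 0)
     else if t = s then 1 else 0)"

definition idR :: "nat \<Rightarrow> nat \<Rightarrow> complex" where
  "idR t s = (if t = s then 1 else 0)"

lemma lt6_cases: "(t::nat) < 6 \<Longrightarrow> t = 0 \<or> t = 1 \<or> t = 2 \<or> t = 3 \<or> t = 4 \<or> t = 5"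
  by auto

lemma tagR_unitary:
  assumes cd0: "c * c + d * d = 1" and ss: "ss < 6"
  shows "unitary_on {..<7} (tagR c d ss)"
  unfolding unitary_on_def
proof (intro ballI)
  fix t t' :: nat assume t: "t \<in> {..<7}" and t': "t' \<in> {..<7}"
  have cd: "complex_of_real c * complex_of_real c + complex_of_real d * complex_of_real d = 1"
    using cd0 by (metis of_real_1 of_real_add of_real_mult)
  define A where "A = tagR c d ss t ss * cnj (tagR c d ss t' ss)"
  define B where "B = tagR c d ss t 6 * cnj (tagR c d ss t' 6)"
  have pw: "tagR c d ss t s * cnj (tagR c d ss t' s) =
      (if s = ss then A else 0) + (if s = 6 then B else 0) + (if s = t then (if t = t' \<and> t \<noteq> ss \<and> t \<noteq> 6 then 1 else 0) else 0)" for s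
    using ss unfolding A_def B_def by (auto simp: tagR_def)
  have "(\<Sum>s\<in>{..<7}. tagR c d ss t s * cnj (tagR c d ss t' s)) =
      (\<Sum>s\<in>{..<7}. (if s = ss then A else 0) + (if s = 6 then B else 0) + (if s = t then (if t = t' \<and> t \<noteq> ss \<and> t \<noteq> 6 then 1 else 0) else 0))"
    by (simp only: pw)
  also have "\<dots> = A + B + (if t = t' \<and> t \<noteq> ss \<and> t \<noteq> 6 then 1 else 0)"
    using ss t by (simp add: sum.distrib)
  also have "\<dots> = (if t = t' then 1 else 0)"
    using ss cd unfolding A_def B_def by (auto simp: tagR_def algebra_simps)
  finally show "(\<Sum>s\<in>{..<7}. tagR c d ss t s * cnj (tagR c d ss t' s)) = (if t = t' then 1 else 0)" .
qed

lemma idR_unitary: "unitary_on {..<7} idR"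
  unfolding unitary_on_def
proof (intro ballI)
  fix t t' :: nat assume "t \<in> {..<7}" "t' \<in> {..<7}"
  have "(\<Sum>s\<in>{..<7}. idR t s * cnj (idR t' s)) = (\<Sum>s\<in>{..<7}. if s = t then (if t = t' then 1 else 0) else 0)"
    by (intro sum.cong) (auto simp: idR_def)
  then show "(\<Sum>s\<in>{..<7}. idR t s * cnj (idR t' s)) = (if t = t' then 1 else 0)"
    using \<open>t \<in> {..<7}\<close> by simp
qed

lemma perm_unitary:
  assumes "unitary_on {..<7} R" "\<And>t. t < 7 \<Longrightarrow> sg t < 7" "\<And>t t'. t < 7 \<Longrightarrow> t' < 7 \<Longrightarrow> sg t = sg t' \<Longrightarrow> t = t'"
  shows "unitary_on {..<7} (\<lambda>t s. R (sg t) s)"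
  using assms unfolding unitary_on_def by (metis lessThan_iff)

definition qa_C :: "('a, bit) qfst \<Rightarrow> real \<Rightarrow> real \<Rightarrow> 'a tsym \<Rightarrow> nat \<Rightarrow> nat \<Rightarrow> nat \<Rightarrow> complex" where
  "qa_C T c d a q t s = (if a = LEnd then tagR c d (sig (outf T LEnd (q0 T)) 0) (sig (outf T a q) t) s
                         else idR (sig (outf T a q) t) s)"

definition live7 :: "('a, bit) qfst \<Rightarrow> nat set" where
  "live7 T = {n. n div 7 \<in> st T - (acc T \<union> rej T) \<and> n mod 7 < 3}"

definition acc7 :: "('a, bit) qfst \<Rightarrow> bool \<Rightarrow> nat set" where
  "acc7 T z = {n. n div 7 \<in> acc T \<and> n mod 7 = 1} \<union> {n. n div 7 \<in> st T \<and> n mod 7 = 6 \<and> z}"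

definition qfa_of :: "('a, bit) qfst \<Rightarrow> real \<Rightarrow> real \<Rightarrow> bool \<Rightarrow> 'a qfa" where
  "qfa_of T c d z = \<lparr> qst = {n. n div 7 \<in> st T},
     qV = (\<lambda>a n m. qa_C T c d a (n div 7) (n mod 7) (m mod 7) * V T a (n div 7) (m div 7)),
     qq0 = 7 * q0 T,
     qacc = acc7 T z,
     qrej = {n. n div 7 \<in> st T} - live7 T - acc7 T z \<rparr>"

lemma qa_C_unitary:
  assumes "c * c + d * d = 1"
  shows "unitary_on {..<7} (qa_C T c d a q)"
proof (cases "a = LEnd")
  case True
  have "unitary_on {..<7} (\<lambda>t s. tagR c d (sig (outf T LEnd (q0 T)) 0) (sig (outf T a q) t) s)"
    by (rule perm_unitary[OF tagR_unitary[OF assms sig_ne6]]) (auto intro: sig_lt sig_inj)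
  then show ?thesis using True by (simp add: qa_C_def[abs_def])
next
  case False
  have "unitary_on {..<7} (\<lambda>t s. idR (sig (outf T a q) t) s)"
    by (rule perm_unitary[OF idR_unitary]) (auto intro: sig_lt sig_inj)
  then show ?thesis using False by (simp add: qa_C_def[abs_def])
qed

lemma qfa_of_wf:
  assumes wf: "qfst_wf T" and cd: "c * c + d * d = 1"
  shows "qfa_wf (qfa_of T c d z)"
proof -
  have fin: "finite (st T)" using wf by (simp add: qfst_wf_def)
  have U: "unitary_on {n. n div 7 \<in> st T}
           (\<lambda>n m. qa_C T c d a (n div 7) (n mod 7) (m mod 7) * V T a (n div 7) (m div 7))" for a
  proof -
    have "\<And>g. g < 7 \<Longrightarrow> unitary_on (st T) ((\<lambda>g. V T a) g)" using wf by (simp add: qfst_wf_def)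
    from unitary_block[of 7 "st T" "\<lambda>g. V T a" "qa_C T c d a", OF _ fin this qa_C_unitary[OF cd]]
    show ?thesis by simp
  qed
  have R: "qa_C T c d REnd (n div 7) (n mod 7) (m mod 7) * V T REnd (n div 7) (m div 7) = 0"
    if "n \<in> live7 T" "m \<in> live7 T" for n m
    using that wf by (simp add: qfst_wf_def live7_def)
  show ?thesis
    unfolding qfa_wf_def qfa_of_def
    using fin wf U R
    by (auto simp: finite_div_set qfst_wf_def acc7_def live7_def)
qed

lemma div7[simp]: "t < 7 \<Longrightarrow> (7*q+t) div 7 = (q::nat)" by simp
lemma mod7[simp]: "t < 7 \<Longrightarrow> (7*q+t) mod 7 = (t::nat)" by simp
lemma suc7[simp]: "Suc (7*q) div 7 = q" "Suc (7*q) mod 7 = 1"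
  using div7[of 1 q] mod7[of 1 q] by simp_all

lemma keyL:
  assumes "s < 3"
  shows "(\<Sum>t<3. \<phi> (wt t) * idR (sig u t) s) =
    (if length u \<le> length (wt s) \<and> drop (length (wt s) - length u) (wt s) = u
     then \<phi> (take (length (wt s) - length u) (wt s)) else 0)"
proof (cases u rule: list_cases3)
  case 1 then show ?thesis using assms
    by (auto simp: sum3 wt_def sig_def idR_def dest!: lt3_cases)
next
  case (2 b) then show ?thesis using assms bit_cases[of b]
    by (auto simp: sum3 wt_def sig_def idR_def dest!: lt3_cases)
next
  case (3 b c r) then show ?thesis using assms
    by (auto simp: sum3 wt_def sig_def idR_def dest!: lt3_cases)
qed


lemma evolveM:
  assumes "finite (st T)" "s < 7"
  shows "qfa_evolve (qfa_of T c d z) a \<psi> (7*p+s) =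
     (\<Sum>q\<in>st T. \<Sum>t<7. \<psi> (7*q+t) * qa_C T c d a q t s * V T a q p)"
  unfolding qfa_evolve_def qfa_of_def
  using assms by (simp add: sum_div_set mult.assoc)

definition rel7 :: "('a, bit) qfst \<Rightarrow> complex \<Rightarrow> (nat \<Rightarrow> complex) \<Rightarrow> (nat \<Rightarrow> bit list \<Rightarrow> complex) \<Rightarrow> bool" where
  "rel7 T c \<psi>M \<psi>T \<longleftrightarrow> (\<forall>q\<in>st T. \<forall>t<3. \<psi>M (7*q+t) = c * \<psi>T q (wt t))
                        \<and> (\<forall>q\<in>st T. \<forall>t. 3 \<le> t \<and> t < 7 \<longrightarrow> \<psi>M (7*q+t) = 0)"

lemma inner_rel:
  assumes "rel7 T c \<psi>M \<psi>T" "q \<in> st T"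
  shows "(\<Sum>t<7. \<psi>M (7*q+t) * idR (sig u t) s * X) = c * (\<Sum>t<3. \<psi>T q (wt t) * idR (sig u t) s) * X"
proof -
  have r1: "\<psi>M (7*q+t) = c * \<psi>T q (wt t)" if "t < 3" for t using assms that by (simp add: rel7_def)
  have r2: "\<psi>M (7*q+t) = 0" if "3 \<le> t" "t < 7" for t using assms that by (simp add: rel7_def)
  have h: "\<psi>M (7*q+0) = c * \<psi>T q (wt 0)" "\<psi>M (7*q+1) = c * \<psi>T q (wt 1)"
    "\<psi>M (7*q+2) = c * \<psi>T q (wt 2)" "\<psi>M (7*q+3) = 0" "\<psi>M (7*q+4) = 0" "\<psi>M (7*q+5) = 0"
    "\<psi>M (7*q+6) = 0" using r1[of 0] r1[of 1] r1[of 2] r2[of 3] r2[of 4] r2[of 5] r2[of 6] by simp_all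
  show ?thesis by (simp only: sum7 sum3 h) (simp add: algebra_simps)
qed

lemma inner_rel6:
  assumes "rel7 T c \<psi>M \<psi>T" "q \<in> st T"
  shows "(\<Sum>t<7. \<psi>M (7*q+t) * idR (sig u t) 6 * X) = 0"
proof -
  have r1: "idR (sig u t) 6 = 0" if "t < 3" for t using sig_ne6[of t u] that by (simp add: idR_def)
  have r2: "\<psi>M (7*q+t) = 0" if "3 \<le> t" "t < 7" for t using assms that by (simp add: rel7_def)
  have h: "idR (sig u 0) 6 = 0" "idR (sig u 1) 6 = 0" "idR (sig u 2) 6 = 0"
    "\<psi>M (7*q+3) = 0" "\<psi>M (7*q+4) = 0" "\<psi>M (7*q+5) = 0"
    "\<psi>M (7*q+6) = 0" using r1[of 0] r1[of 1] r1[of 2] r2[of 3] r2[of 4] r2[of 5] r2[of 6] by simp_all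
  show ?thesis by (simp only: sum7 h) simp
qed

lemma evolveM_rel:
  assumes "finite (st T)" "a \<noteq> LEnd" "rel7 T c \<psi>M \<psi>T" "s < 3"
  shows "qfa_evolve (qfa_of T c' d z) a \<psi>M (7*p+s) = c * qfst_evolve T a \<psi>T p (wt s)"
proof -
  have "qfa_evolve (qfa_of T c' d z) a \<psi>M (7*p+s) =
     (\<Sum>q\<in>st T. \<Sum>t<7. \<psi>M (7*q+t) * idR (sig (outf T a q) t) s * V T a q p)"
    using assms by (simp add: evolveM qa_C_def)
  also have "\<dots> = (\<Sum>q\<in>st T. c * (\<Sum>t<3. \<psi>T q (wt t) * idR (sig (outf T a q) t) s) * V T a q p)"
    using assms by (intro sum.cong refl inner_rel)
  also have "\<dots> = c * qfst_evolve T a \<psi>T p (wt s)"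
    unfolding qfst_evolve_def using assms(4) by (auto simp: keyL sum_distrib_left intro!: sum.cong)
  finally show ?thesis .
qed

lemma evolveM_rel6:
  assumes "finite (st T)" "a \<noteq> LEnd" "rel7 T c \<psi>M \<psi>T"
  shows "qfa_evolve (qfa_of T c' d z) a \<psi>M (7*p+6) = 0"
proof -
  have "qfa_evolve (qfa_of T c' d z) a \<psi>M (7*p+6) =
     (\<Sum>q\<in>st T. \<Sum>t<7. \<psi>M (7*q+t) * idR (sig (outf T a q) t) 6 * V T a q p)"
    using assms by (simp add: evolveM qa_C_def)
  also have "\<dots> = 0"
    using assms by (simp add: inner_rel6)
  finally show ?thesis .
qed

lemma acc7_sum:
  assumes "finite (st T)" "acc T \<subseteq> st T"
  shows "(\<Sum>n\<in>acc7 T z. F n) = (\<Sum>q\<in>acc T. F (7*q+1)) + (if z then (\<Sum>q\<in>st T. F (7*q+6)) else 0)"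
proof -
  have A: "{n. n div 7 \<in> acc T \<and> n mod 7 = 1} = (\<lambda>q. 7*q+1) ` acc T"
  proof (intro set_eqI iffI)
    fix n assume "n \<in> {n. n div 7 \<in> acc T \<and> n mod 7 = 1}"
    then show "n \<in> (\<lambda>q. 7*q+1) ` acc T"
      using div_mult_mod_eq[of n 7] by (intro image_eqI[where x="n div 7"]) auto
  qed auto
  have Z: "{n. n div 7 \<in> st T \<and> n mod 7 = 6 \<and> z} = (if z then (\<lambda>q. 7*q+6) ` st T else {})"
  proof (cases z)
    case True
    have "{n. n div 7 \<in> st T \<and> n mod 7 = 6} = (\<lambda>q. 7*q+6) ` st T"
    proof (intro set_eqI iffI)
      fix n assume "n \<in> {n. n div 7 \<in> st T \<and> n mod 7 = 6}"
      then show "n \<in> (\<lambda>q. 7*q+6) ` st T"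
        using div_mult_mod_eq[of n 7] by (intro image_eqI[where x="n div 7"]) auto
    qed auto
    then show ?thesis using True by simp
  qed simp
  have fA: "finite (acc T)" using assms finite_subset by blast
  have inj1: "inj_on (\<lambda>q. 7*q+1) X" for X :: "nat set" by (auto intro: inj_onI)
  have inj6: "inj_on (\<lambda>q. 7*q+6) X" for X :: "nat set" by (auto intro: inj_onI)
  have ne: "7*x+1 \<noteq> 7*y+(6::nat)" for x y
  proof
    assume "7*x+1 = 7*y+(6::nat)"
    then have "(7*x+1) mod 7 = (7*y+6) mod (7::nat)" by simp
    then show False by simp
  qed
  have disj: "(\<lambda>q. 7*q+1) ` acc T \<inter> (\<lambda>q. 7*q+6) ` st T = {}" using ne by blast
  have s1: "sum F ((\<lambda>q. 7*q+1) ` acc T) = (\<Sum>q\<in>acc T. F (7*q+1))"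
    by (rule sum.reindex[OF inj1, unfolded comp_def])
  have s6: "sum F ((\<lambda>q. 7*q+6) ` st T) = (\<Sum>q\<in>st T. F (7*q+6))"
    by (rule sum.reindex[OF inj6, unfolded comp_def])
  have fi: "finite ((\<lambda>q. 7*q+1) ` acc T)" "finite ((\<lambda>q. 7*q+6) ` st T)" using fA assms by auto
  show ?thesis
  proof (cases z)
    case True
    then show ?thesis unfolding acc7_def A Z
      using sum.union_disjoint[OF fi disj, of F] s1 s6 by simp
  next
    case False
    then show ?thesis unfolding acc7_def A Z using s1 by simp
  qed
qed

lemma live_iff:
  assumes "acc T \<subseteq> st T" "rej T \<subseteq> st T"
  shows "n \<in> qst (qfa_of T c d z) - (qacc (qfa_of T c d z) \<union> qrej (qfa_of T c d z)) \<longleftrightarrow> n \<in> live7 T"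
  using assms by (auto simp: qfa_of_def live7_def acc7_def)

lemma projM:
  assumes "acc T \<subseteq> st T" "rej T \<subseteq> st T" "t < 7"
  shows "qfa_proj_non (qfa_of T c d z) \<phi> (7*q+t) = (if q \<in> st T - (acc T \<union> rej T) \<and> t < 3 then \<phi> (7*q+t) else 0)"
  unfolding qfa_proj_non_def live_iff[OF assms(1,2)] using assms(3) by (simp add: live7_def)

lemma sim_back:
  assumes wf: "qfst_wf T" and "LEnd \<notin> set as" "rel7 T c \<psi>M \<psi>T"
  shows "qfa_acc_run (qfa_of T c' d z) \<psi>M as = (cmod c)\<^sup>2 * qfst_acc_run T \<psi>T as [Zero]"
  using assms(2,3)
proof (induction as arbitrary: \<psi>M \<psi>T)
  case Nil
  then show ?case by simp
next
  case (Cons a as)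
  have fin: "finite (st T)" and sub: "acc T \<subseteq> st T" "rej T \<subseteq> st T" using wf by (auto simp: qfst_wf_def)
  have aL: "a \<noteq> LEnd" using Cons by auto
  let ?M = "qfa_of T c' d z"
  define \<phi>M where "\<phi>M = qfa_evolve ?M a \<psi>M"
  define \<phi>T where "\<phi>T = qfst_evolve T a \<psi>T"
  have e: "\<phi>M (7*p+s) = c * \<phi>T p (wt s)" if "s < 3" for p s
    unfolding \<phi>M_def \<phi>T_def using evolveM_rel[OF fin aL Cons.prems(2) that] .
  have e6: "\<phi>M (7*p+6) = 0" for p
    unfolding \<phi>M_def using evolveM_rel6[OF fin aL Cons.prems(2)] .
  have acc: "(\<Sum>n\<in>qacc ?M. (cmod (\<phi>M n))\<^sup>2) = (cmod c)\<^sup>2 * (\<Sum>p\<in>acc T. (cmod (\<phi>T p [Zero]))\<^sup>2)"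
  proof -
    have "(\<Sum>n\<in>qacc ?M. (cmod (\<phi>M n))\<^sup>2) = (\<Sum>p\<in>acc T. (cmod (\<phi>M (7*p+1)))\<^sup>2)"
      by (simp add: qfa_of_def acc7_sum[OF fin sub(1)] e6)
    also have "\<dots> = (\<Sum>p\<in>acc T. (cmod c)\<^sup>2 * (cmod (\<phi>T p [Zero]))\<^sup>2)"
      using e[of 1] by (simp add: wt_def norm_mult power_mult_distrib)
    finally show ?thesis by (simp add: sum_distrib_left)
  qed
  have rel: "rel7 T c (qfa_proj_non ?M \<phi>M) (qfst_proj_non T \<phi>T)"
    unfolding rel7_def using sub by (auto simp: projM e qfst_proj_non_def)
  have "qfa_acc_run ?M \<psi>M (a # as) = (\<Sum>n\<in>qacc ?M. (cmod (\<phi>M n))\<^sup>2) + qfa_acc_run ?M (qfa_proj_non ?M \<phi>M) as"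
    by (simp add: \<phi>M_def Let_def)
  also have "\<dots> = (cmod c)\<^sup>2 * (\<Sum>p\<in>acc T. (cmod (\<phi>T p [Zero]))\<^sup>2) + (cmod c)\<^sup>2 * qfst_acc_run T (qfst_proj_non T \<phi>T) as [Zero]"
    using acc Cons.IH[OF _ rel] Cons.prems(1) by simp
  also have "\<dots> = (cmod c)\<^sup>2 * qfst_acc_run T \<psi>T (a # as) [Zero]"
    by (simp add: \<phi>T_def Let_def algebra_simps)
  finally show ?case .
qed

lemma row_norm:
  assumes "unitary_on Q U" "q \<in> Q"
  shows "(\<Sum>p\<in>Q. (cmod (U q p))\<^sup>2) = 1"
proof -
  have "complex_of_real (\<Sum>p\<in>Q. (cmod (U q p))\<^sup>2) = (\<Sum>p\<in>Q. U q p * cnj (U q p))"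
    by (simp only: of_real_sum complex_norm_square)
  also have "\<dots> = 1" using assms unfolding unitary_on_def by auto
  finally show ?thesis by (metis of_real_eq_1_iff)
qed

lemma tape_split: "tape v = LEnd # (map Sym v @ [REnd])" "LEnd \<notin> set (map Sym v @ [REnd])"
  by (auto simp: tape_def)

lemma delta_sum2:
  fixes Q :: "nat set" and X :: "nat \<Rightarrow> nat \<Rightarrow> complex"
  assumes "finite Q" "r0 \<in> Q"
  shows "(\<Sum>q\<in>Q. \<Sum>t<7. (if 7*q+t = 7*r0 then 1 else 0) * X q t) = (X r0 0 :: complex)"
proof -
  have "(\<Sum>q\<in>Q. \<Sum>t<7. (if 7*q+t = 7*r0 then 1 else 0) * X q t) =
        (\<Sum>q\<in>Q. if q = r0 then (\<Sum>t<7. if t = 0 then X q t else 0) else 0)"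
  proof (intro sum.cong refl)
    fix q assume "q \<in> Q"
    have "(\<Sum>t<7. (if 7*q+t = 7*r0 then 1 else 0) * X q t) = (\<Sum>t<7. if q = r0 \<and> t = 0 then X q t else 0)"
    proof (intro sum.cong refl)
      fix t assume "t \<in> {..<7::nat}"
      then have "7*q+t = 7*r0 \<longleftrightarrow> q = r0 \<and> t = 0"
        by (metis div7 mod7 add_0_right lessThan_iff zero_less_numeral)
      then show "(if 7*q+t = 7*r0 then 1 else 0) * X q t = (if q = r0 \<and> t = 0 then X q t else 0)" by simp
    qed
    then show "(\<Sum>t<7. (if 7*q+t = 7*r0 then 1 else 0) * X q t) = (if q = r0 then (\<Sum>t<7. if t = 0 then X q t else 0) else 0)"
      by simp
  qed
  also have "\<dots> = X r0 0" using assms by simp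
  finally show ?thesis .
qed

lemma prob_back:
  assumes wf: "qfst_wf T" and cd: "c * c + d * d = 1"
  shows "qfa_prob (qfa_of T c d z) v = c\<^sup>2 * qfst_prob T [Zero] v + (if z then d\<^sup>2 else 0)"
proof -
  have fin: "finite (st T)" and sub: "acc T \<subseteq> st T" "rej T \<subseteq> st T" and q0: "q0 T \<in> st T"
    and U: "unitary_on (st T) (V T LEnd)"
    using wf by (auto simp: qfst_wf_def)
  let ?M = "qfa_of T c d z"
  define ss where "ss = sig (outf T LEnd (q0 T)) 0"
  have ss6: "ss < 6" unfolding ss_def by (rule sig_ne6) simp
  define \<psi>M where "\<psi>M = (\<lambda>n::nat. if n = qq0 ?M then (1::complex) else 0)"
  define \<psi>T where "\<psi>T = (\<lambda>q (x::bit list). if q = q0 T \<and> x = [] then (1::complex) else 0)"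
  define \<phi>M where "\<phi>M = qfa_evolve ?M LEnd \<psi>M"
  define \<phi>T where "\<phi>T = qfst_evolve T LEnd \<psi>T"
  define rest where "rest = map Sym v @ [REnd]"
  have eM: "\<phi>M (7*p+s) = tagR c d ss ss s * V T LEnd (q0 T) p" if "s < 7" for p s
  proof -
    have "\<phi>M (7*p+s) = (\<Sum>q\<in>st T. \<Sum>t<7. (if 7*q+t = 7*q0 T then 1 else 0) * (qa_C T c d LEnd q t s * V T LEnd q p))"
      unfolding \<phi>M_def using evolveM[OF fin that] by (simp add: \<psi>M_def qfa_of_def mult.assoc)
    also have "\<dots> = qa_C T c d LEnd (q0 T) 0 s * V T LEnd (q0 T) p"
      by (rule delta_sum2[OF fin q0])
    finally show ?thesis by (simp add: qa_C_def ss_def)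
  qed
  have idT: "idR ss s = (if length (outf T LEnd (q0 T)) \<le> length (wt s) \<and>
        drop (length (wt s) - length (outf T LEnd (q0 T))) (wt s) = outf T LEnd (q0 T)
      then (if take (length (wt s) - length (outf T LEnd (q0 T))) (wt s) = [] then 1 else 0) else 0)"
    if "s < 3" for s
    using keyL[OF that, of "\<lambda>x. if x = [] then 1 else 0" "outf T LEnd (q0 T)"]
    by (simp add: sum3 wt_def ss_def)
  have eT: "\<phi>T p (wt s) = idR ss s * V T LEnd (q0 T) p" if "s < 3" for p s
  proof -
    have "\<phi>T p (wt s) = (\<Sum>q\<in>st T. if q = q0 T then idR ss s * V T LEnd (q0 T) p else 0)"
      unfolding \<phi>T_def qfst_evolve_def
      by (intro sum.cong refl) (auto simp: \<psi>T_def idT[OF that])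
    also have "\<dots> = idR ss s * V T LEnd (q0 T) p" using fin q0 by simp
    finally show ?thesis .
  qed
  have e: "\<phi>M (7*p+s) = complex_of_real c * \<phi>T p (wt s)" if "s < 3" for p s
    using eM[of s p] eT[OF that, of p] that ss6 by (auto simp: tagR_def idR_def)
  have e6: "\<phi>M (7*p+6) = complex_of_real d * V T LEnd (q0 T) p" for p
    using eM[of 6 p] ss6 by (simp add: tagR_def)
  have acc: "(\<Sum>n\<in>qacc ?M. (cmod (\<phi>M n))\<^sup>2) = c\<^sup>2 * (\<Sum>p\<in>acc T. (cmod (\<phi>T p [Zero]))\<^sup>2) + (if z then d\<^sup>2 else 0)"
  proof -
    have "(\<Sum>n\<in>qacc ?M. (cmod (\<phi>M n))\<^sup>2) = (\<Sum>p\<in>acc T. (cmod (\<phi>M (7*p+1)))\<^sup>2)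
           + (if z then (\<Sum>p\<in>st T. (cmod (\<phi>M (7*p+6)))\<^sup>2) else 0)"
      by (simp add: qfa_of_def acc7_sum[OF fin sub(1)])
    also have "(\<Sum>p\<in>acc T. (cmod (\<phi>M (7*p+1)))\<^sup>2) = (\<Sum>p\<in>acc T. c\<^sup>2 * (cmod (\<phi>T p [Zero]))\<^sup>2)"
      using e[of 1] by (simp add: wt_def norm_mult power_mult_distrib)
    also have "(\<Sum>p\<in>st T. (cmod (\<phi>M (7*p+6)))\<^sup>2) = (\<Sum>p\<in>st T. d\<^sup>2 * (cmod (V T LEnd (q0 T) p))\<^sup>2)"
      using e6 by (simp add: norm_mult power_mult_distrib)
    also have "\<dots> = d\<^sup>2" using row_norm[OF U q0] by (simp add: sum_distrib_left[symmetric])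
    finally show ?thesis by (simp add: sum_distrib_left)
  qed
  have rel: "rel7 T (complex_of_real c) (qfa_proj_non ?M \<phi>M) (qfst_proj_non T \<phi>T)"
    unfolding rel7_def using sub by (auto simp: projM e qfst_proj_non_def)
  have "qfa_prob ?M v = (\<Sum>n\<in>qacc ?M. (cmod (\<phi>M n))\<^sup>2) + qfa_acc_run ?M (qfa_proj_non ?M \<phi>M) rest"
    unfolding qfa_prob_def tape_split(1) rest_def[symmetric]
    by (simp add: \<phi>M_def \<psi>M_def Let_def)
  also have "qfa_acc_run ?M (qfa_proj_non ?M \<phi>M) rest = c\<^sup>2 * qfst_acc_run T (qfst_proj_non T \<phi>T) rest [Zero]"
    using sim_back[OF wf tape_split(2) rel, where c'=c and d=d and z=z] unfolding rest_def by simp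
  also have "qfst_prob T [Zero] v = (\<Sum>p\<in>acc T. (cmod (\<phi>T p [Zero]))\<^sup>2) + qfst_acc_run T (qfst_proj_non T \<phi>T) rest [Zero]"
    unfolding qfst_prob_def tape_split(1) rest_def[symmetric]
    by (simp add: \<phi>T_def \<psi>T_def Let_def)
  ultimately show ?thesis using acc by (simp add: algebra_simps)
qed

lemma back_dir:
  assumes wf: "qfst_wf T" and ci: "computes_isolated T (char_rel L)"
  shows "\<exists>M :: 'a qfa. qfa_wf M \<and> qfa_accepts_bounded M L"
proof -
  obtain \<alpha> \<epsilon> :: real where a: "0 < \<alpha>" "\<alpha> < 1" "\<epsilon> > 0" and
    R: "\<And>v w. (v, w) \<in> char_rel L \<Longrightarrow> qfst_prob T w v \<ge> \<alpha> + \<epsilon>"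
       "\<And>v w. (v, w) \<notin> char_rel L \<Longrightarrow> qfst_prob T w v \<le> \<alpha> - \<epsilon>"
    using ci unfolding computes_isolated_def by blast
  define z where "z = (\<alpha> \<le> 1/2)"
  define c2 where "c2 = (if z then 1 / (2 * (1 - \<alpha>)) else 1 / (2 * \<alpha>))"
  have c2: "0 < c2 \<and> c2 \<le> 1"
  proof (cases z)
    case True
    then have "\<alpha> \<le> 1/2" unfolding z_def .
    then show ?thesis using True a unfolding c2_def by (simp add: field_simps)
  next
    case False
    then have "\<alpha> > 1/2" unfolding z_def by simp
    then show ?thesis using False a unfolding c2_def by (simp add: field_simps)
  qed
  then have c2: "0 < c2" "c2 \<le> 1" by auto
  have c2a: "c2 * \<alpha> + (if z then 1 - c2 else 0) = 1/2"
  proof (cases z)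
    case True
    then have "1 - \<alpha> \<noteq> 0" using a by simp
    then have h: "c2 * (1 - \<alpha>) = 1/2" using True unfolding c2_def by simp
    have "c2 * \<alpha> + (1 - c2) = 1 - c2 * (1 - \<alpha>)" by (simp add: algebra_simps)
    then show ?thesis using True h by simp
  next
    case False
    then show ?thesis using a unfolding c2_def by (simp add: field_simps)
  qed
  define c where "c = sqrt c2"
  define d where "d = sqrt (1 - c2)"
  have cc: "c\<^sup>2 = c2" "d\<^sup>2 = 1 - c2" using c2 unfolding c_def d_def by simp_all
  have cd: "c * c + d * d = 1" using cc by (simp add: power2_eq_square)
  let ?M = "qfa_of T c d z"
  have P: "qfa_prob ?M v = c2 * qfst_prob T [Zero] v + (if z then 1 - c2 else 0)" for v
    using prob_back[OF wf cd, of z v] cc by simp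
  have inL: "(v, [Zero]) \<in> char_rel L \<longleftrightarrow> v \<in> L" for v by (auto simp: char_rel_def)
  have "qfa_accepts_bounded ?M L"
    unfolding qfa_accepts_bounded_def
  proof (intro exI[of _ "c2 * \<epsilon>"] conjI allI impI)
    show "0 < c2 * \<epsilon>" using c2 a by simp
  next
    fix v assume "v \<in> L"
    then have "qfst_prob T [Zero] v \<ge> \<alpha> + \<epsilon>" using R(1) inL by blast
    then have "c2 * qfst_prob T [Zero] v \<ge> c2 * (\<alpha> + \<epsilon>)" using c2 by (simp add: mult_left_mono)
    then show "1/2 + c2 * \<epsilon> \<le> qfa_prob ?M v" using P[of v] c2a by (simp add: algebra_simps)
  next
    fix v assume "v \<notin> L"
    then have "qfst_prob T [Zero] v \<le> \<alpha> - \<epsilon>" using R(2) inL by blast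
    then have "c2 * qfst_prob T [Zero] v \<le> c2 * (\<alpha> - \<epsilon>)" using c2 by (simp add: mult_left_mono)
    then show "qfa_prob ?M v \<le> 1/2 - c2 * \<epsilon>" using P[of v] c2a by (simp add: algebra_simps)
  qed
  then show ?thesis using qfa_of_wf[OF wf cd] by blast
qed

definition enc6 :: "nat \<Rightarrow> nat \<Rightarrow> nat" where "enc6 q f = 6*q+f"

lemma enc6_div[simp]: "f < 6 \<Longrightarrow> enc6 q f div 6 = q" by (simp add: enc6_def)
lemma enc6_mod[simp]: "f < 6 \<Longrightarrow> enc6 q f mod 6 = f" by (simp add: enc6_def)

lemma sum_div6:
  assumes "finite Q"
  shows "(\<Sum>n\<in>{n. n div 6 \<in> Q}. g n) = (\<Sum>q\<in>Q. \<Sum>f<6. g (enc6 q f))"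
  using sum_div_set[of 6 Q g] assms by (simp add: enc6_def)

definition liveM :: "'a qfa \<Rightarrow> nat \<Rightarrow> bool" where
  "liveM M q \<longleftrightarrow> q \<in> qst M - (qacc M \<union> qrej M)"

definition tauS :: "'a qfa \<Rightarrow> nat \<Rightarrow> nat \<Rightarrow> nat" where
  "tauS M q f = 3 * (f div 3) + (if f mod 3 = 0 then (if liveM M q then 0 else 1)
       else if f mod 3 = 1 then (if liveM M q then 1 else 0) else 2)"

definition tauE :: "'a qfa \<Rightarrow> nat \<Rightarrow> nat \<Rightarrow> nat" where
  "tauE M q f = 3 * (f div 3) + (if f mod 3 = 0 then (if liveM M q then 1 else 2)
       else if f mod 3 = 1 then (if liveM M q then 2 else 1) else 0)"

definition hs :: complex where "hs = complex_of_real (1 / sqrt 2)"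

lemma hs_sq: "hs * hs = 1/2"
proof -
  have r: "1 / sqrt 2 * (1 / sqrt 2) = (1/2::real)" by (simp add: field_simps)
  have "hs * hs = complex_of_real (1 / sqrt 2 * (1 / sqrt 2))" by (simp only: hs_def of_real_mult)
  also have "\<dots> = complex_of_real (1/2)" by (simp only: r)
  also have "\<dots> = 1/2" by simp
  finally show ?thesis .
qed

lemma cnj_hs[simp]: "cnj hs = hs" by (simp add: hs_def)

definition hadC :: "nat \<Rightarrow> nat \<Rightarrow> complex" where
  "hadC f g = (if f mod 3 = 0 \<and> g mod 3 = 0 then (if f = 3 \<and> g = 3 then - hs else hs)
               else if f = g then 1 else 0)"

definition tC :: "'a qfa \<Rightarrow> 'a tsym \<Rightarrow> nat \<Rightarrow> nat \<Rightarrow> nat \<Rightarrow> complex" where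
  "tC M a q f g = (case a of LEnd \<Rightarrow> hadC f g | REnd \<Rightarrow> idR (tauE M q f) g | Sym _ \<Rightarrow> idR (tauS M q f) g)"

definition tMx :: "'a qfa \<Rightarrow> 'a tsym \<Rightarrow> nat \<Rightarrow> nat \<Rightarrow> nat \<Rightarrow> complex" where
  "tMx M a g = (case a of REnd \<Rightarrow> (if g mod 3 = 1 then qV M a else idR)
                | _ \<Rightarrow> (if g mod 3 = 0 then qV M a else idR))"

definition bitx :: "nat \<Rightarrow> bit" where "bitx x = (if x = 0 then Zero else One)"

definition outT :: "'a qfa \<Rightarrow> 'a tsym \<Rightarrow> nat \<Rightarrow> bit list" where
  "outT M a n = (case a of LEnd \<Rightarrow> []
      | REnd \<Rightarrow> (if n mod 6 mod 3 = 0 then [bitx (n mod 6 div 3)] else [])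
      | Sym _ \<Rightarrow> (if n mod 6 mod 3 = 0 \<and> \<not> liveM M (n div 6) then [bitx (n mod 6 div 3)] else []))"

definition accT :: "'a qfa \<Rightarrow> nat set" where
  "accT M = {n. n div 6 \<in> qacc M \<and> (n mod 6 = 1 \<or> n mod 6 = 2)} \<union> {n. n div 6 \<in> qrej M \<and> (n mod 6 = 4 \<or> n mod 6 = 5)}"

definition rejT :: "'a qfa \<Rightarrow> nat set" where
  "rejT M = {n. n div 6 \<in> qst M \<and> n mod 6 mod 3 \<noteq> 0} - accT M"

definition qfst_of :: "'a qfa \<Rightarrow> ('a, bit) qfst" where
  "qfst_of M = \<lparr> st = {n. n div 6 \<in> qst M},
     V = (\<lambda>a n m. tC M a (n div 6) (n mod 6) (m mod 6) * tMx M a (m mod 6) (n div 6) (m div 6)),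
     outf = outT M, q0 = 6 * qq0 M, acc = accT M, rej = rejT M \<rparr>"

lemma idR_unitary_gen: "finite K \<Longrightarrow> unitary_on K idR"
  unfolding unitary_on_def
proof (intro ballI)
  fix t t' :: nat assume "finite K" "t \<in> K" "t' \<in> K"
  have "(\<Sum>s\<in>K. idR t s * cnj (idR t' s)) = (\<Sum>s\<in>K. if s = t then (if t = t' then 1 else 0) else 0)"
    by (intro sum.cong) (auto simp: idR_def)
  then show "(\<Sum>s\<in>K. idR t s * cnj (idR t' s)) = (if t = t' then 1 else 0)"
    using \<open>t \<in> K\<close> \<open>finite K\<close> by simp
qed

lemma perm_unitary_gen:
  assumes "unitary_on K R" "\<And>t. t \<in> K \<Longrightarrow> sg t \<in> K" "\<And>t t'. t \<in> K \<Longrightarrow> t' \<in> K \<Longrightarrow> sg t = sg t' \<Longrightarrow> t = t'"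
  shows "unitary_on K (\<lambda>t s. R (sg t) s)"
  using assms unfolding unitary_on_def by metis

lemma tauS_lt: "f < 6 \<Longrightarrow> tauS M q f < 6"
  by (auto simp: tauS_def dest!: lt6_cases)
lemma tauE_lt: "f < 6 \<Longrightarrow> tauE M q f < 6"
  by (auto simp: tauE_def dest!: lt6_cases)
lemma tauS_inj: "f < 6 \<Longrightarrow> f' < 6 \<Longrightarrow> tauS M q f = tauS M q f' \<Longrightarrow> f = f'"
  by (cases "liveM M q") (auto simp: tauS_def dest!: lt6_cases)
lemma tauE_inj: "f < 6 \<Longrightarrow> f' < 6 \<Longrightarrow> tauE M q f = tauE M q f' \<Longrightarrow> f = f'"
  by (cases "liveM M q") (auto simp: tauE_def dest!: lt6_cases)

lemma hadC_unitary: "unitary_on {..<6} hadC"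
  unfolding unitary_on_def
  apply (intro ballI)
  apply (simp only: lessThan_iff sum6)
  apply (auto dest!: lt6_cases)
  by (simp_all add: hadC_def hs_sq)

lemma tC_unitary: "unitary_on {..<6} (tC M a q)"
proof (cases a)
  case (Sym x)
  have "unitary_on {..<6} (\<lambda>t s. idR (tauS M q t) s)"
    by (rule perm_unitary_gen[OF idR_unitary_gen]) (auto intro: tauS_lt tauS_inj)
  then show ?thesis using Sym by (simp add: tC_def[abs_def])
next
  case LEnd then show ?thesis using hadC_unitary by (simp add: tC_def[abs_def])
next
  case REnd
  have "unitary_on {..<6} (\<lambda>t s. idR (tauE M q t) s)"
    by (rule perm_unitary_gen[OF idR_unitary_gen]) (auto intro: tauE_lt tauE_inj)
  then show ?thesis using REnd by (simp add: tC_def[abs_def])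
qed

lemma tMx_unitary: "qfa_wf M \<Longrightarrow> unitary_on (qst M) (tMx M a g)"
  by (cases a) (auto simp: tMx_def qfa_wf_def idR_unitary_gen)

lemma liveT_iff:
  assumes "qfa_wf M"
  shows "n \<in> st (qfst_of M) - (acc (qfst_of M) \<union> rej (qfst_of M)) \<longleftrightarrow> n div 6 \<in> qst M \<and> n mod 6 mod 3 = 0"
  using assms by (auto simp: qfst_of_def accT_def rejT_def qfa_wf_def)

lemma qfst_of_wf:
  assumes wf: "qfa_wf M"
  shows "qfst_wf (qfst_of M)"
proof -
  have fin: "finite (qst M)" using wf by (simp add: qfa_wf_def)
  have U: "unitary_on {n. n div 6 \<in> qst M}
       (\<lambda>n m. tC M a (n div 6) (n mod 6) (m mod 6) * tMx M a (m mod 6) (n div 6) (m div 6))" for a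
    using unitary_block[of 6 "qst M" "tMx M a" "tC M a", OF _ fin tMx_unitary[OF wf] tC_unitary] by simp
  have R: "tC M REnd (n div 6) (n mod 6) (m mod 6) = 0"
    if "n mod 6 mod 3 = 0" "m mod 6 mod 3 = 0" for n m
  proof -
    have "tauE M (n div 6) (n mod 6) mod 3 \<noteq> 0" using that by (auto simp: tauE_def)
    then have "tauE M (n div 6) (n mod 6) \<noteq> m mod 6" using that by auto
    then show ?thesis by (simp add: tC_def idR_def)
  qed
  show ?thesis
    unfolding qfst_wf_def
  proof (intro conjI)
    show "\<forall>q\<in>st (qfst_of M) - (acc (qfst_of M) \<union> rej (qfst_of M)).
       \<forall>p\<in>st (qfst_of M) - (acc (qfst_of M) \<union> rej (qfst_of M)). V (qfst_of M) REnd q p = 0"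
    proof (intro ballI)
      fix n m assume "n \<in> st (qfst_of M) - (acc (qfst_of M) \<union> rej (qfst_of M))"
        "m \<in> st (qfst_of M) - (acc (qfst_of M) \<union> rej (qfst_of M))"
      then have "n mod 6 mod 3 = 0" "m mod 6 mod 3 = 0" using liveT_iff[OF wf] by auto
      then show "V (qfst_of M) REnd n m = 0" using R by (simp add: qfst_of_def)
    qed
  qed (use wf fin U in \<open>auto simp: qfst_of_def finite_div_set qfa_wf_def accT_def rejT_def\<close>)
qed

fun racc :: "'a qfa \<Rightarrow> nat set \<Rightarrow> (nat \<Rightarrow> complex) \<Rightarrow> 'a tsym list \<Rightarrow> real" where
  "racc M S \<psi> [] = 0"
| "racc M S \<psi> (a # as) = (let \<phi> = qfa_evolve M a \<psi>
      in (\<Sum>p\<in>S. (cmod (\<phi> p))\<^sup>2) + racc M S (qfa_proj_non M \<phi>) as)"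

lemma racc_acc: "qfa_acc_run M \<psi> as = racc M (qacc M) \<psi> as"
  by (induction as arbitrary: \<psi>) (simp_all add: Let_def)

lemma racc_nonneg: "racc M S \<psi> as \<ge> 0"
  by (induction as arbitrary: \<psi>) (simp_all add: Let_def sum_nonneg add_nonneg_nonneg)

lemma sum_subset_if: "A \<subseteq> B \<Longrightarrow> finite B \<Longrightarrow> sum F A = (\<Sum>x\<in>B. if x \<in> A then F x else 0)"
  using sum.inter_restrict[of B F A] by (metis Int_absorb2 inf_commute)

lemma partition_norm:
  assumes wf: "qfa_wf M"
  shows "(\<Sum>q\<in>qst M. (cmod (\<phi> q))\<^sup>2) = (\<Sum>q\<in>qacc M. (cmod (\<phi> q))\<^sup>2) + (\<Sum>q\<in>qrej M. (cmod (\<phi> q))\<^sup>2)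
          + (\<Sum>q\<in>qst M. (cmod (qfa_proj_non M \<phi> q))\<^sup>2)"
proof -
  have fin: "finite (qst M)" and A: "qacc M \<subseteq> qst M" and R: "qrej M \<subseteq> qst M" and D: "qacc M \<inter> qrej M = {}"
    using wf by (auto simp: qfa_wf_def)
  have pw: "(cmod (\<phi> q))\<^sup>2 = (if q \<in> qacc M then (cmod (\<phi> q))\<^sup>2 else 0) + (if q \<in> qrej M then (cmod (\<phi> q))\<^sup>2 else 0)
          + (cmod (qfa_proj_non M \<phi> q))\<^sup>2" if "q \<in> qst M" for q
    using that D by (auto simp: qfa_proj_non_def)
  have "(\<Sum>q\<in>qst M. (cmod (\<phi> q))\<^sup>2) = (\<Sum>q\<in>qst M. (if q \<in> qacc M then (cmod (\<phi> q))\<^sup>2 else 0) + (if q \<in> qrej M then (cmod (\<phi> q))\<^sup>2 else 0)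
          + (cmod (qfa_proj_non M \<phi> q))\<^sup>2)"
    by (intro sum.cong refl pw)
  also have "\<dots> = (\<Sum>q\<in>qacc M. (cmod (\<phi> q))\<^sup>2) + (\<Sum>q\<in>qrej M. (cmod (\<phi> q))\<^sup>2)
          + (\<Sum>q\<in>qst M. (cmod (qfa_proj_non M \<phi> q))\<^sup>2)"
    by (simp add: sum.distrib sum_subset_if[OF A fin] sum_subset_if[OF R fin])
  finally show ?thesis .
qed

lemma evolve_norm:
  assumes wf: "qfa_wf M"
  shows "(\<Sum>p\<in>qst M. (cmod (qfa_evolve M a \<psi> p))\<^sup>2) = (\<Sum>q\<in>qst M. (cmod (\<psi> q))\<^sup>2)"
  using norm_pres[of "qst M" "qV M a" \<psi>] wf by (simp add: qfa_wf_def qfa_evolve_def)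

lemma cons_gen:
  assumes wf: "qfa_wf M" and sup: "\<And>q. q \<in> qst M \<Longrightarrow> \<not> liveM M q \<Longrightarrow> \<psi> q = 0"
  shows "racc M (qacc M) \<psi> (as @ [REnd]) + racc M (qrej M) \<psi> (as @ [REnd]) = (\<Sum>q\<in>qst M. (cmod (\<psi> q))\<^sup>2)"
  using sup
proof (induction as arbitrary: \<psi>)
  case Nil
  define \<phi> where "\<phi> = qfa_evolve M REnd \<psi>"
  have z: "qfa_proj_non M \<phi> q = 0" for q
  proof (cases "liveM M q")
    case True
    have "\<phi> q = (\<Sum>r\<in>qst M. \<psi> r * qV M REnd r q)" by (simp add: \<phi>_def qfa_evolve_def)
    also have "\<dots> = 0"
    proof (intro sum.neutral ballI)
      fix r assume "r \<in> qst M"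
      show "\<psi> r * qV M REnd r q = 0"
      proof (cases "liveM M r")
        case True
        then show ?thesis using \<open>liveM M q\<close> wf by (simp add: liveM_def qfa_wf_def)
      next
        case False then show ?thesis using Nil \<open>r \<in> qst M\<close> by simp
      qed
    qed
    finally show ?thesis by (simp add: qfa_proj_non_def)
  next
    case False then show ?thesis by (auto simp: qfa_proj_non_def liveM_def)
  qed
  show ?case
    using partition_norm[OF wf, of \<phi>] evolve_norm[OF wf, of REnd \<psi>] z
    by (simp add: \<phi>_def Let_def)
next
  case (Cons a as)
  define \<phi> where "\<phi> = qfa_evolve M a \<psi>"
  have sup': "qfa_proj_non M \<phi> q = 0" if "q \<in> qst M" "\<not> liveM M q" for q
    using that by (simp add: qfa_proj_non_def liveM_def)
  have IH: "racc M (qacc M) (qfa_proj_non M \<phi>) (as @ [REnd]) + racc M (qrej M) (qfa_proj_non M \<phi>) (as @ [REnd])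
      = (\<Sum>q\<in>qst M. (cmod (qfa_proj_non M \<phi> q))\<^sup>2)"
    using Cons.IH sup' by blast
  show ?case
    using partition_norm[OF wf, of \<phi>] evolve_norm[OF wf, of a \<psi>] IH
    by (simp add: \<phi>_def Let_def)
qed

lemma cons_step:
  assumes wf: "qfa_wf M"
  shows "racc M (qacc M) \<psi> (a # as @ [REnd]) + racc M (qrej M) \<psi> (a # as @ [REnd]) = (\<Sum>q\<in>qst M. (cmod (\<psi> q))\<^sup>2)"
proof -
  define \<phi> where "\<phi> = qfa_evolve M a \<psi>"
  have sup': "qfa_proj_non M \<phi> q = 0" if "q \<in> qst M" "\<not> liveM M q" for q
    using that by (simp add: qfa_proj_non_def liveM_def)
  have IH: "racc M (qacc M) (qfa_proj_non M \<phi>) (as @ [REnd]) + racc M (qrej M) (qfa_proj_non M \<phi>) (as @ [REnd])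
      = (\<Sum>q\<in>qst M. (cmod (qfa_proj_non M \<phi> q))\<^sup>2)"
    using cons_gen[OF wf] sup' by blast
  show ?thesis
    using partition_norm[OF wf, of \<phi>] evolve_norm[OF wf, of a \<psi>] IH
    by (simp add: \<phi>_def Let_def)
qed

lemma conservation:
  assumes wf: "qfa_wf M"
  shows "racc M (qacc M) (\<lambda>q. if q = qq0 M then 1 else 0) (tape v) + racc M (qrej M) (\<lambda>q. if q = qq0 M then 1 else 0) (tape v) = 1"
proof -
  have fin: "finite (qst M)" and q0: "qq0 M \<in> qst M" using wf by (auto simp: qfa_wf_def)
  have t: "tape v = LEnd # map Sym v @ [REnd]" by (simp add: tape_def)
  have "(\<Sum>q\<in>qst M. (cmod (if q = qq0 M then 1 else (0::complex)))\<^sup>2) = (\<Sum>q\<in>qst M. if q = qq0 M then 1 else 0)"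
    by (intro sum.cong) auto
  also have "\<dots> = 1" using fin q0 by simp
  finally show ?thesis
    unfolding t using cons_step[OF wf, of _ LEnd "map Sym v"] by simp
qed

definition rel6 :: "'a qfa \<Rightarrow> complex \<Rightarrow> (nat \<Rightarrow> bit list \<Rightarrow> complex) \<Rightarrow> (nat \<Rightarrow> complex) \<Rightarrow> bool" where
  "rel6 M h \<psi>T \<phi> \<longleftrightarrow> (\<forall>q\<in>qst M. \<forall>f<6. \<forall>w. \<psi>T (enc6 q f) w = (if f mod 3 = 0 \<and> w = [] then h * \<phi> q else 0))"

lemma out_cond_iff:
  "(length u \<le> length w \<and> drop (length w - length u) w = u \<and> take (length w - length u) w = []) \<longleftrightarrow> w = u"
proof
  assume h: "length u \<le> length w \<and> drop (length w - length u) w = u \<and> take (length w - length u) w = []"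
  then have "length w - length u = 0 \<or> w = []" by (simp only: take_eq_Nil)
  then show "w = u"
  proof
    assume "length w - length u = 0"
    then have "length w - length u = 0" .
    with h have "drop 0 w = u" by simp
    then show "w = u" by simp
  next
    assume "w = []"
    with h show "w = u" by simp
  qed
qed simp

lemma out_cond:
  "(if length u \<le> length w \<and> drop (length w - length u) w = u then (if take (length w - length u) w = [] then A else 0) else 0)
   = (if w = u then A else 0)"
proof -
  have e: "(if P then (if Q then A else 0) else 0) = (if P \<and> Q then A else 0)" for P Q by simp
  show ?thesis unfolding e conj_assoc out_cond_iff ..
qed

lemma evolveT_gen:
  assumes wf: "qfa_wf M" and rel: "rel6 M h \<psi>T \<phi>" and g: "g < 6"
  shows "qfst_evolve (qfst_of M) a \<psi>T (enc6 p g) w =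
    (\<Sum>q\<in>qst M. (if w = outT M a (enc6 q 0) then h * \<phi> q * (tC M a q 0 g * tMx M a g q p) else 0)
               + (if w = outT M a (enc6 q 3) then h * \<phi> q * (tC M a q 3 g * tMx M a g q p) else 0))"
proof -
  have fin: "finite (qst M)" using wf by (simp add: qfa_wf_def)
  define G where "G q f = (if w = outT M a (enc6 q f) then h * \<phi> q * (tC M a q f g * tMx M a g q p) else 0)" for q f
  have pw: "(if length (outT M a (enc6 q f)) \<le> length w \<and> drop (length w - length (outT M a (enc6 q f))) w = outT M a (enc6 q f)
            then \<psi>T (enc6 q f) (take (length w - length (outT M a (enc6 q f))) w) * (tC M a q f g * tMx M a g q p) else 0)
        = (if f mod 3 = 0 then G q f else 0)" if "q \<in> qst M" "f < 6" for q f
  proof -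
    have "\<psi>T (enc6 q f) x = (if f mod 3 = 0 \<and> x = [] then h * \<phi> q else 0)" for x
      using rel that by (simp add: rel6_def)
    then show ?thesis unfolding G_def using out_cond[of "outT M a (enc6 q f)" w] by auto
  qed
  have "qfst_evolve (qfst_of M) a \<psi>T (enc6 p g) w =
      (\<Sum>q\<in>qst M. \<Sum>f<6. (if length (outT M a (enc6 q f)) \<le> length w \<and> drop (length w - length (outT M a (enc6 q f))) w = outT M a (enc6 q f)
            then \<psi>T (enc6 q f) (take (length w - length (outT M a (enc6 q f))) w) * (tC M a q f g * tMx M a g q p) else 0))"
    unfolding qfst_evolve_def using g fin
    apply (simp only: qfst_of_def qfst.simps sum_div6[OF fin])
    apply (intro sum.cong refl)
    by simp
  also have "\<dots> = (\<Sum>q\<in>qst M. \<Sum>f<6. if f mod 3 = 0 then G q f else 0)"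
    by (intro sum.cong refl) (simp add: pw)
  also have "\<dots> = (\<Sum>q\<in>qst M. G q 0 + G q 3)"
    by (simp add: sum6)
  finally show ?thesis unfolding G_def .
qed

lemma evolveT_Sym:
  assumes wf: "qfa_wf M" and rel: "rel6 M h \<psi>T \<phi>" and g: "g < 6" and a: "a = Sym b"
  shows "qfst_evolve (qfst_of M) a \<psi>T (enc6 p g) w =
    (if g mod 3 = 0 then (if w = [] then h * qfa_evolve M a (qfa_proj_non M \<phi>) p else 0)
     else if g mod 3 = 1 then (if w = [bitx (g div 3)] \<and> p \<in> qst M \<and> \<not> liveM M p then h * \<phi> p else 0)
     else 0)"
proof -
  have fin: "finite (qst M)" using wf by (simp add: qfa_wf_def)
  have pw: "(if w = outT M a (enc6 q 0) then h * \<phi> q * (tC M a q 0 g * tMx M a g q p) else 0)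
               + (if w = outT M a (enc6 q 3) then h * \<phi> q * (tC M a q 3 g * tMx M a g q p) else 0)
     = (if g mod 3 = 0 then (if w = [] then h * (qfa_proj_non M \<phi> q * qV M a q p) else 0)
        else if g mod 3 = 1 then (if q = p then (if w = [bitx (g div 3)] \<and> \<not> liveM M q then h * \<phi> q else 0) else 0)
        else 0)" if "q \<in> qst M" for q
    using g that a
    by (cases "liveM M q")
       (auto simp: tC_def tMx_def tauS_def outT_def idR_def bitx_def qfa_proj_non_def liveM_def dest!: lt6_cases)
  show ?thesis
    unfolding evolveT_gen[OF wf rel g]
    using fin by (simp add: pw qfa_evolve_def sum_distrib_left mult.assoc cong: sum.cong)
qed

lemma evolveT_REnd:
  assumes wf: "qfa_wf M" and rel: "rel6 M h \<psi>T \<phi>" and g: "g < 6"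
  shows "qfst_evolve (qfst_of M) REnd \<psi>T (enc6 p g) w =
    (if g mod 3 = 1 then (if w = [bitx (g div 3)] then h * qfa_evolve M REnd (qfa_proj_non M \<phi>) p else 0)
     else if g mod 3 = 2 then (if w = [bitx (g div 3)] \<and> p \<in> qst M \<and> \<not> liveM M p then h * \<phi> p else 0)
     else 0)"
proof -
  have fin: "finite (qst M)" using wf by (simp add: qfa_wf_def)
  have pw: "(if w = outT M REnd (enc6 q 0) then h * \<phi> q * (tC M REnd q 0 g * tMx M REnd g q p) else 0)
               + (if w = outT M REnd (enc6 q 3) then h * \<phi> q * (tC M REnd q 3 g * tMx M REnd g q p) else 0)
     = (if g mod 3 = 1 then (if w = [bitx (g div 3)] then h * (qfa_proj_non M \<phi> q * qV M REnd q p) else 0)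
        else if g mod 3 = 2 then (if q = p then (if w = [bitx (g div 3)] \<and> \<not> liveM M q then h * \<phi> q else 0) else 0)
        else 0)" if "q \<in> qst M" for q
    using g that
    by (cases "liveM M q")
       (auto simp: tC_def tMx_def tauE_def outT_def idR_def bitx_def qfa_proj_non_def liveM_def dest!: lt6_cases)
  show ?thesis
    unfolding evolveT_gen[OF wf rel g]
    using fin by (simp add: pw qfa_evolve_def sum_distrib_left mult.assoc cong: sum.cong)
qed

lemma accT_sum:
  assumes wf: "qfa_wf M"
  shows "(\<Sum>n\<in>accT M. F n) = (\<Sum>q\<in>qacc M. F (enc6 q 1) + F (enc6 q 2)) + (\<Sum>q\<in>qrej M. F (enc6 q 4) + F (enc6 q 5))"
proof -
  have fin: "finite (qst M)" and A: "qacc M \<subseteq> qst M" and R: "qrej M \<subseteq> qst M" and D: "qacc M \<inter> qrej M = {}"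
    using wf by (auto simp: qfa_wf_def)
  have sub: "accT M \<subseteq> {n. n div 6 \<in> qst M}" using A R by (auto simp: accT_def)
  have mem: "enc6 q f \<in> accT M \<longleftrightarrow> (q \<in> qacc M \<and> (f = 1 \<or> f = 2)) \<or> (q \<in> qrej M \<and> (f = 4 \<or> f = 5))"
    if "f < 6" for q f
    using that by (simp add: accT_def)
  have pw: "(\<Sum>f<6. if enc6 q f \<in> accT M then F (enc6 q f) else 0) =
      (if q \<in> qacc M then F (enc6 q 1) + F (enc6 q 2) else 0) + (if q \<in> qrej M then F (enc6 q 4) + F (enc6 q 5) else 0)"
    for q
    using D by (auto simp: sum6 mem)
  have "(\<Sum>n\<in>accT M. F n) = (\<Sum>n\<in>{n. n div 6 \<in> qst M}. if n \<in> accT M then F n else 0)"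
    by (rule sum_subset_if[OF sub finite_div_set]) (use fin in auto)
  also have "\<dots> = (\<Sum>q\<in>qst M. (if q \<in> qacc M then F (enc6 q 1) + F (enc6 q 2) else 0) + (if q \<in> qrej M then F (enc6 q 4) + F (enc6 q 5) else 0))"
    by (simp add: sum_div6[OF fin] pw)
  also have "\<dots> = (\<Sum>q\<in>qacc M. F (enc6 q 1) + F (enc6 q 2)) + (\<Sum>q\<in>qrej M. F (enc6 q 4) + F (enc6 q 5))"
    by (simp only: sum.distrib sum_subset_if[OF A fin, symmetric] sum_subset_if[OF R fin, symmetric])
  finally show ?thesis .
qed

lemma projT:
  assumes wf: "qfa_wf M" and "f < 6"
  shows "qfst_proj_non (qfst_of M) E (enc6 q f) w = (if q \<in> qst M \<and> f mod 3 = 0 then E (enc6 q f) w else 0)"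
  unfolding qfst_proj_non_def liveT_iff[OF wf] using assms by simp

definition XX :: "'a qfa \<Rightarrow> nat set \<Rightarrow> (nat \<Rightarrow> complex) \<Rightarrow> 'a tsym list \<Rightarrow> real" where
  "XX M S \<phi> as = (\<Sum>p\<in>S. (cmod (\<phi> p))\<^sup>2) + racc M S (qfa_proj_non M \<phi>) as"

lemma sum_if_const: "(\<Sum>p\<in>A. if c then X p else 0) = (if c then (\<Sum>p\<in>A. X p) else (0::real))"
  by simp

lemma acc_notlive: "qfa_wf M \<Longrightarrow> p \<in> qacc M \<or> p \<in> qrej M \<Longrightarrow> p \<in> qst M \<and> \<not> liveM M p"
  by (auto simp: qfa_wf_def liveM_def)

lemma sim_fwd:
  assumes wf: "qfa_wf M" and rel: "rel6 M h \<psi>T \<phi>"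
  shows "qfst_acc_run (qfst_of M) \<psi>T (map Sym bs @ [REnd]) w =
     (cmod h)\<^sup>2 * ((if w = [Zero] then XX M (qacc M) \<phi> (map Sym bs @ [REnd]) else 0)
                  + (if w = [One] then XX M (qrej M) \<phi> (map Sym bs @ [REnd]) else 0))"
  using rel
proof (induction bs arbitrary: \<psi>T \<phi>)
  case Nil
  let ?T = "qfst_of M"
  define E where "E = qfst_evolve ?T REnd \<psi>T"
  define ev where "ev = qfa_evolve M REnd (qfa_proj_non M \<phi>)"
  have Eg: "E (enc6 p g) w = (if g mod 3 = 1 then (if w = [bitx (g div 3)] then h * ev p else 0)
     else if g mod 3 = 2 then (if w = [bitx (g div 3)] \<and> p \<in> qst M \<and> \<not> liveM M p then h * \<phi> p else 0)
     else 0)" if "g < 6" for p g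
    unfolding E_def ev_def by (rule evolveT_REnd[OF wf Nil that])
  have a1: "(cmod (E (enc6 p 1) w))\<^sup>2 + (cmod (E (enc6 p 2) w))\<^sup>2 =
      (if w = [Zero] then (cmod h)\<^sup>2 * ((cmod (ev p))\<^sup>2 + (cmod (\<phi> p))\<^sup>2) else 0)" if "p \<in> qacc M" for p
    using Eg[of 1 p] Eg[of 2 p] acc_notlive[OF wf, of p] that
    by (auto simp: bitx_def norm_mult power_mult_distrib algebra_simps)
  have a2: "(cmod (E (enc6 p 4) w))\<^sup>2 + (cmod (E (enc6 p 5) w))\<^sup>2 =
      (if w = [One] then (cmod h)\<^sup>2 * ((cmod (ev p))\<^sup>2 + (cmod (\<phi> p))\<^sup>2) else 0)" if "p \<in> qrej M" for p
    using Eg[of 4 p] Eg[of 5 p] acc_notlive[OF wf, of p] that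
    by (auto simp: bitx_def norm_mult power_mult_distrib algebra_simps)
  have "qfst_acc_run ?T \<psi>T [REnd] w = (\<Sum>n\<in>accT M. (cmod (E n w))\<^sup>2)"
    by (simp add: E_def Let_def qfst_of_def)
  also have "\<dots> = (\<Sum>q\<in>qacc M. (if w = [Zero] then (cmod h)\<^sup>2 * ((cmod (ev q))\<^sup>2 + (cmod (\<phi> q))\<^sup>2) else 0))
      + (\<Sum>q\<in>qrej M. (if w = [One] then (cmod h)\<^sup>2 * ((cmod (ev q))\<^sup>2 + (cmod (\<phi> q))\<^sup>2) else 0))"
    unfolding accT_sum[OF wf] using a1 a2 by (simp cong: sum.cong)
  also have "\<dots> = (cmod h)\<^sup>2 * ((if w = [Zero] then XX M (qacc M) \<phi> [REnd] else 0)
                  + (if w = [One] then XX M (qrej M) \<phi> [REnd] else 0))"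
    unfolding sum_if_const
    by (simp add: XX_def ev_def Let_def sum_distrib_left sum.distrib algebra_simps)
  finally show ?case by simp
next
  case (Cons b bs)
  let ?T = "qfst_of M"
  let ?rest = "map Sym bs @ [REnd]"
  define E where "E = qfst_evolve ?T (Sym b) \<psi>T"
  define \<phi>' where "\<phi>' = qfa_evolve M (Sym b) (qfa_proj_non M \<phi>)"
  have Eg: "E (enc6 p g) w' = (if g mod 3 = 0 then (if w' = [] then h * \<phi>' p else 0)
     else if g mod 3 = 1 then (if w' = [bitx (g div 3)] \<and> p \<in> qst M \<and> \<not> liveM M p then h * \<phi> p else 0)
     else 0)" if "g < 6" for p g w'
    unfolding E_def \<phi>'_def by (rule evolveT_Sym[OF wf Cons.prems that refl])
  have a1: "(cmod (E (enc6 p 1) w))\<^sup>2 + (cmod (E (enc6 p 2) w))\<^sup>2 =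
      (if w = [Zero] then (cmod h)\<^sup>2 * (cmod (\<phi> p))\<^sup>2 else 0)" if "p \<in> qacc M" for p
    using Eg[of 1 p] Eg[of 2 p] acc_notlive[OF wf, of p] that
    by (auto simp: bitx_def norm_mult power_mult_distrib)
  have a2: "(cmod (E (enc6 p 4) w))\<^sup>2 + (cmod (E (enc6 p 5) w))\<^sup>2 =
      (if w = [One] then (cmod h)\<^sup>2 * (cmod (\<phi> p))\<^sup>2 else 0)" if "p \<in> qrej M" for p
    using Eg[of 4 p] Eg[of 5 p] acc_notlive[OF wf, of p] that
    by (auto simp: bitx_def norm_mult power_mult_distrib)
  have rel': "rel6 M h (qfst_proj_non ?T E) \<phi>'"
    unfolding rel6_def
  proof (intro ballI allI impI)
    fix q and f :: nat and w' assume "q \<in> qst M" "f < 6"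
    then show "qfst_proj_non ?T E (enc6 q f) w' = (if f mod 3 = 0 \<and> w' = [] then h * \<phi>' q else 0)"
      using Eg[of f q w'] by (auto simp: projT[OF wf])
  qed
  have acc: "(\<Sum>n\<in>accT M. (cmod (E n w))\<^sup>2) = (cmod h)\<^sup>2 * ((if w = [Zero] then (\<Sum>q\<in>qacc M. (cmod (\<phi> q))\<^sup>2) else 0)
      + (if w = [One] then (\<Sum>q\<in>qrej M. (cmod (\<phi> q))\<^sup>2) else 0))"
    unfolding accT_sum[OF wf] using a1 a2 by (simp add: sum_if_const sum_distrib_left cong: sum.cong)
  have "qfst_acc_run ?T \<psi>T (Sym b # ?rest) w = (\<Sum>n\<in>accT M. (cmod (E n w))\<^sup>2) + qfst_acc_run ?T (qfst_proj_non ?T E) ?rest w"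
    by (simp add: E_def Let_def qfst_of_def)
  also have "\<dots> = (cmod h)\<^sup>2 * ((if w = [Zero] then XX M (qacc M) \<phi> (Sym b # ?rest) else 0)
                  + (if w = [One] then XX M (qrej M) \<phi> (Sym b # ?rest) else 0))"
    unfolding acc Cons.IH[OF rel']
    by (simp add: XX_def \<phi>'_def Let_def algebra_simps)
  finally show ?case by simp
qed

lemma prob_fwd:
  assumes wf: "qfa_wf M"
  shows "qfst_prob (qfst_of M) w v =
     (if w = [Zero] then racc M (qacc M) (\<lambda>q. if q = qq0 M then 1 else 0) (tape v) / 2 else 0)
   + (if w = [One] then racc M (qrej M) (\<lambda>q. if q = qq0 M then 1 else 0) (tape v) / 2 else 0)"
proof -
  have fin: "finite (qst M)" and q0: "qq0 M \<in> qst M" using wf by (auto simp: qfa_wf_def)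
  let ?T = "qfst_of M"
  define \<psi>T where "\<psi>T = (\<lambda>q (x::bit list). if q = q0 ?T \<and> x = [] then (1::complex) else 0)"
  define \<psi>M where "\<psi>M = (\<lambda>q. if q = qq0 M then (1::complex) else 0)"
  define E where "E = qfst_evolve ?T LEnd \<psi>T"
  define \<phi> where "\<phi> = qfa_evolve M LEnd \<psi>M"
  define rest where "rest = map Sym v @ [REnd]"
  have \<phi>p: "\<phi> p = qV M LEnd (qq0 M) p" for p
  proof -
    have "\<phi> p = (\<Sum>q\<in>qst M. if q = qq0 M then qV M LEnd q p else 0)"
      unfolding \<phi>_def qfa_evolve_def \<psi>M_def by (intro sum.cong refl) auto
    then show ?thesis using fin q0 by simp
  qed
  have Eg: "E (enc6 p g) x = (if x = [] \<and> g mod 3 = 0 then hs * \<phi> p else 0)" if "g < 6" for p g x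
  proof -
    have eq: "enc6 q f = 6 * qq0 M \<longleftrightarrow> q = qq0 M \<and> f = 0" if "f < 6" for q f
    proof
      assume h: "enc6 q f = 6 * qq0 M"
      have "enc6 q f mod 6 = 0" "enc6 q f div 6 = qq0 M" by (simp_all add: h)
      then show "q = qq0 M \<and> f = 0" using that by simp
    qed (simp add: enc6_def)
    have "E (enc6 p g) x = (\<Sum>q\<in>qst M. \<Sum>f<6. (if q = qq0 M \<and> f = 0 \<and> x = [] then 1 else 0) * (tC M LEnd q f g * tMx M LEnd g q p))"
      unfolding E_def qfst_evolve_def using that fin
      apply (simp only: qfst_of_def qfst.simps sum_div6[OF fin])
      apply (intro sum.cong refl)
      by (auto simp: outT_def \<psi>T_def eq qfst_of_def)
    also have "\<dots> = (\<Sum>q\<in>qst M. if q = qq0 M then (if x = [] then tC M LEnd q 0 g * tMx M LEnd g q p else 0) else 0)"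
      by (intro sum.cong refl) (auto simp: sum6)
    also have "\<dots> = (if x = [] then tC M LEnd (qq0 M) 0 g * tMx M LEnd g (qq0 M) p else 0)"
      using fin q0 by simp
    also have "\<dots> = (if x = [] \<and> g mod 3 = 0 then hs * \<phi> p else 0)"
      using that by (auto simp: tC_def hadC_def tMx_def \<phi>p)
    finally show ?thesis .
  qed
  have rel: "rel6 M hs (qfst_proj_non ?T E) \<phi>"
    unfolding rel6_def
  proof (intro ballI allI impI)
    fix q and f :: nat and w' assume "q \<in> qst M" "f < 6"
    then show "qfst_proj_non ?T E (enc6 q f) w' = (if f mod 3 = 0 \<and> w' = [] then hs * \<phi> q else 0)"
      using Eg[of f q w'] by (auto simp: projT[OF wf])
  qed
  have acc0: "(\<Sum>n\<in>accT M. (cmod (E n w))\<^sup>2) = 0"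
    unfolding accT_sum[OF wf] by (simp add: Eg)
  have hs2: "(cmod hs)\<^sup>2 = 1/2"
    by (simp add: hs_def norm_divide power_divide)
  have "qfst_prob ?T w v = (\<Sum>n\<in>accT M. (cmod (E n w))\<^sup>2) + qfst_acc_run ?T (qfst_proj_non ?T E) rest w"
    unfolding qfst_prob_def tape_split(1) rest_def[symmetric]
    by (simp add: E_def \<psi>T_def Let_def qfst_of_def)
  also have "\<dots> = (cmod hs)\<^sup>2 * ((if w = [Zero] then XX M (qacc M) \<phi> rest else 0)
                  + (if w = [One] then XX M (qrej M) \<phi> rest else 0))"
    unfolding acc0 rest_def using sim_fwd[OF wf rel] by simp
  finally have fin1: "qfst_prob ?T w v = (cmod hs)\<^sup>2 * ((if w = [Zero] then XX M (qacc M) \<phi> rest else 0)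
                  + (if w = [One] then XX M (qrej M) \<phi> rest else 0))" .
  have xx: "XX M S \<phi> rest = racc M S \<psi>M (tape v)" for S
    unfolding XX_def tape_split(1) rest_def[symmetric] by (simp add: \<phi>_def Let_def)
  show ?thesis unfolding fin1 xx hs2 \<psi>M_def by simp
qed

lemma fwd_dir:
  assumes wf: "qfa_wf M" and ab: "qfa_accepts_bounded M L"
  shows "\<exists>T :: ('a, bit) qfst. qfst_wf T \<and> computes_isolated T (char_rel L)"
proof -
  obtain \<delta> :: real where d: "\<delta> > 0" and B: "\<And>v. v \<in> L \<Longrightarrow> qfa_prob M v \<ge> 1/2 + \<delta>"
    "\<And>v. v \<notin> L \<Longrightarrow> qfa_prob M v \<le> 1/2 - \<delta>"
    using ab unfolding qfa_accepts_bounded_def by blast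
  define \<psi>M where "\<psi>M = (\<lambda>q. if q = qq0 M then (1::complex) else 0)"
  have P: "qfa_prob M v = racc M (qacc M) \<psi>M (tape v)" for v
    by (simp add: qfa_prob_def \<psi>M_def racc_acc)
  have C: "racc M (qrej M) \<psi>M (tape v) = 1 - qfa_prob M v" for v
    using conservation[OF wf, of v] P[of v] unfolding \<psi>M_def by simp
  have P0: "0 \<le> qfa_prob M v" "qfa_prob M v \<le> 1" for v
    using P[of v] C[of v] racc_nonneg[of M "qacc M" \<psi>M "tape v"] racc_nonneg[of M "qrej M" \<psi>M "tape v"] by auto
  have dle: "\<delta> \<le> 1/2"
    using B[of "[]"] P0[of "[]"] by (cases "[] \<in> L") auto
  let ?T = "qfst_of M"
  have TP: "qfst_prob ?T w v = (if w = [Zero] then qfa_prob M v / 2 else 0) + (if w = [One] then (1 - qfa_prob M v) / 2 else 0)" for w v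
    using prob_fwd[OF wf, of w v] P[of v] C[of v] unfolding \<psi>M_def by simp
  have main: "\<forall>v w. ((v, w) \<in> char_rel L \<longrightarrow> qfst_prob ?T w v \<ge> 1/4 + \<delta>/2) \<and>
                     ((v, w) \<notin> char_rel L \<longrightarrow> qfst_prob ?T w v \<le> 1/4 - \<delta>/2)"
  proof (intro allI conjI impI)
    fix v w assume "(v, w) \<in> char_rel L"
    then have "(w = [Zero] \<and> v \<in> L) \<or> (w = [One] \<and> v \<notin> L)" by (auto simp: char_rel_def)
    then show "1/4 + \<delta>/2 \<le> qfst_prob ?T w v"
      using B[of v] by (auto simp: TP)
  next
    fix v w assume "(v, w) \<notin> char_rel L"
    then have "(w = [Zero] \<and> v \<notin> L) \<or> (w = [One] \<and> v \<in> L) \<or> (w \<noteq> [Zero] \<and> w \<noteq> [One])"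
      by (auto simp: char_rel_def)
    then show "qfst_prob ?T w v \<le> 1/4 - \<delta>/2"
      using B[of v] dle by (auto simp: TP)
  qed
  have "computes_isolated ?T (char_rel L)"
    unfolding computes_isolated_def using d main
    by (intro exI[of _ "1/4::real"] exI[of _ "\<delta>/2"]) auto
  then show ?thesis using qfst_of_wf[OF wf] by blast
qed

theorem theorem1:
  fixes L :: "'a::finite list set"
  shows "(\<exists>M :: 'a qfa. qfa_wf M \<and> qfa_accepts_bounded M L) \<longleftrightarrow>
         (\<exists>T :: ('a, bit) qfst. qfst_wf T \<and> computes_isolated T (char_rel L))"
  using fwd_dir back_dir by blast

end
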